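(* Let $k\ge 1$ be an integer and $q=2^{-1/k}$. Let $T_k$ be any binary prefix code for the finite set $\mathcal{A}_k=\{(i,j):0\le i,j<k\}$ that is optimal (minimizes $\sum_{(i,j)\in\mathcal{A}_k} q^{i+j}|T_k(i,j)|$) for the weights $w(i,j)=q^{i+j}$ (for $k=1$, $T_1$ assigns the empty word to the single symbol). Then the code $$C_k(i,j)=T_k(i\bmod k,\ j\bmod k)\cdot G_1(\lfloor i/k\rfloor)\cdot G_1(\lfloor j/k\rfloor),\qquad i,j\ge0,$$ where $\cdot$ denotes concatenation of binary strings and $G_1(n)$ is the unary codeword ($n$ ones followed by a zero), is an optimal prefix code for $\mathrm{TDGD}(q)$.
   Context: $\mathcal{A}=\{(i,j): i,j\in\mathbb{Z}_{\ge 0}\}$; $\mathrm{TDGD}(q)$ is the distribution $P(i,j)=(1-q)^2q^{i+j}$ on $\mathcal{A}$. A code is optimal for $\mathrm{TDGD}(q)$ if it minimizes the expected codeword length among all binary prefix codes for $\mathcal{A}$. *)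

theory Defs
  imports "HOL-Analysis.Analysis" "HOL-Library.Sublist"
begin

definition prefix_code :: "'a set \<Rightarrow> ('a \<Rightarrow> bool list) \<Rightarrow> bool" where
  "prefix_code A c \<longleftrightarrow> (\<forall>x\<in>A. \<forall>y\<in>A. x \<noteq> y \<longrightarrow> \<not> prefix (c x) (c y))"

definition alphabet_k :: "nat \<Rightarrow> (nat \<times> nat) set" where
  "alphabet_k k = {0..<k} \<times> {0..<k}"

definition weighted_len_k :: "nat \<Rightarrow> real \<Rightarrow> (nat \<times> nat \<Rightarrow> bool list) \<Rightarrow> real" where
  "weighted_len_k k q c = (\<Sum>(i,j)\<in>alphabet_k k. q ^ (i + j) * real (length (c (i,j))))"

definition optimal_finite_code :: "nat \<Rightarrow> real \<Rightarrow> (nat \<times> nat \<Rightarrow> bool list) \<Rightarrow> bool" where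
  "optimal_finite_code k q c \<longleftrightarrow> prefix_code (alphabet_k k) c \<and>
     (\<forall>d. prefix_code (alphabet_k k) d \<longrightarrow> weighted_len_k k q c \<le> weighted_len_k k q d)"

definition TDGD :: "real \<Rightarrow> nat \<times> nat \<Rightarrow> real" where
  "TDGD q = (\<lambda>(i,j). (1 - q)^2 * q ^ (i + j))"

definition expected_len :: "real \<Rightarrow> (nat \<times> nat \<Rightarrow> bool list) \<Rightarrow> ennreal" where
  "expected_len q c = (\<integral>\<^sup>+ x. ennreal (TDGD q x * real (length (c x))) \<partial>count_space UNIV)"

definition optimal_TDGD :: "real \<Rightarrow> (nat \<times> nat \<Rightarrow> bool list) \<Rightarrow> bool" where
  "optimal_TDGD q c \<longleftrightarrow> prefix_code UNIV c \<and>
     (\<forall>d. prefix_code UNIV d \<longrightarrow> expected_len q c \<le> expected_len q d)"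

definition unary :: "nat \<Rightarrow> bool list" where
  "unary n = replicate n True @ [False]"

end

theory Submission
  imports Defs
begin


section \<open>Kraft inequality\<close>

lemma kraft_aux:
  "\<forall>W::bool list set. finite W \<longrightarrow> (\<forall>u\<in>W. \<forall>v\<in>W. u \<noteq> v \<longrightarrow> \<not> prefix u v) \<longrightarrow>
      (\<forall>w\<in>W. length w \<le> n) \<longrightarrow> (\<Sum>w\<in>W. (1/2::real)^length w) \<le> 1"
proof (induction n)
  case 0
  show ?case
  proof (intro allI impI)
    fix W :: "bool list set" assume "finite W" "\<forall>u\<in>W. \<forall>v\<in>W. u \<noteq> v \<longrightarrow> \<not> prefix u v" "\<forall>w\<in>W. length w \<le> 0"
    then have "W \<subseteq> {[]}" by auto
    then have "W = {} \<or> W = {[]}" by auto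
    then show "(\<Sum>w\<in>W. (1/2::real)^length w) \<le> 1" by auto
  qed
next
  case (Suc n)
  show ?case
  proof (intro allI impI)
    fix W :: "bool list set"
    assume fin: "finite W" and pf: "\<forall>u\<in>W. \<forall>v\<in>W. u \<noteq> v \<longrightarrow> \<not> prefix u v"
      and len: "\<forall>w\<in>W. length w \<le> Suc n"
    show "(\<Sum>w\<in>W. (1/2::real)^length w) \<le> 1"
    proof (cases "[] \<in> W")
      case True
      then have "W = {[]}" using pf by (metis Nil_prefix empty_iff insertI1 subsetI subset_singletonD)
      then show ?thesis by simp
    next
      case False
      define W0 where "W0 = {w. False # w \<in> W}"
      define W1 where "W1 = {w. True # w \<in> W}"
      have WU: "W = Cons False ` W0 \<union> Cons True ` W1"
      proof
        show "W \<subseteq> Cons False ` W0 \<union> Cons True ` W1"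
        proof
          fix w assume "w \<in> W"
          with False obtain b v where "w = b # v" by (cases w) auto
          then show "w \<in> Cons False ` W0 \<union> Cons True ` W1"
            using \<open>w \<in> W\<close> unfolding W0_def W1_def by (cases b) auto
        qed
        show "Cons False ` W0 \<union> Cons True ` W1 \<subseteq> W" unfolding W0_def W1_def by auto
      qed
      have f0: "finite W0"
      proof -
        have "W0 \<subseteq> tl ` W" unfolding W0_def by (auto intro: image_eqI[where x="False # _"])
        then show ?thesis using fin finite_surj by blast
      qed
      have f1: "finite W1"
      proof -
        have "W1 \<subseteq> tl ` W" unfolding W1_def by (auto intro: image_eqI[where x="True # _"])
        then show ?thesis using fin finite_surj by blast
      qed
      have p0: "\<forall>u\<in>W0. \<forall>v\<in>W0. u \<noteq> v \<longrightarrow> \<not> prefix u v" using pf unfolding W0_def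
        by (metis Cons_prefix_Cons list.inject mem_Collect_eq)
      have p1: "\<forall>u\<in>W1. \<forall>v\<in>W1. u \<noteq> v \<longrightarrow> \<not> prefix u v" using pf unfolding W1_def
        by (metis Cons_prefix_Cons list.inject mem_Collect_eq)
      have l0: "\<forall>w\<in>W0. length w \<le> n" using len unfolding W0_def by fastforce
      have l1: "\<forall>w\<in>W1. length w \<le> n" using len unfolding W1_def by fastforce
      have s0: "(\<Sum>w\<in>W0. (1/2::real)^length w) \<le> 1" using Suc.IH f0 p0 l0 by blast
      have s1: "(\<Sum>w\<in>W1. (1/2::real)^length w) \<le> 1" using Suc.IH f1 p1 l1 by blast
      have "(\<Sum>w\<in>W. (1/2::real)^length w) =
          (\<Sum>w\<in>Cons False ` W0. (1/2::real)^length w) + (\<Sum>w\<in>Cons True ` W1. (1/2::real)^length w)"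
        unfolding WU by (rule sum.union_disjoint) (use f0 f1 in auto)
      also have "\<dots> = (\<Sum>w\<in>W0. (1/2::real)^length (False # w)) + (\<Sum>w\<in>W1. (1/2::real)^length (True # w))"
        by (simp add: sum.reindex)
      also have "\<dots> = (1/2) * (\<Sum>w\<in>W0. (1/2::real)^length w) + (1/2) * (\<Sum>w\<in>W1. (1/2::real)^length w)"
        by (simp add: sum_distrib_left)
      also have "\<dots> \<le> 1" using s0 s1 by linarith
      finally show ?thesis .
    qed
  qed
qed

lemma kraft_finite:
  fixes W :: "bool list set"
  assumes "finite W" "\<forall>u\<in>W. \<forall>v\<in>W. u \<noteq> v \<longrightarrow> \<not> prefix u v"
  shows "(\<Sum>w\<in>W. (1/2::real)^length w) \<le> 1"
proof -
  obtain n where "\<forall>w\<in>W. length w \<le> n"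
    using assms(1) by (metis finite_imageI Max_ge image_eqI)
  then show ?thesis using kraft_aux assms by blast
qed

lemma kraft_code:
  assumes "prefix_code A c" "finite F" "F \<subseteq> A"
  shows "(\<Sum>x\<in>F. (1/2::real)^length (c x)) \<le> 1"
proof -
  have inj: "inj_on c F"
  proof (rule inj_onI)
    fix x y assume "x \<in> F" "y \<in> F" "c x = c y"
    then show "x = y" using assms unfolding prefix_code_def by (metis prefix_order.order_refl subsetD)
  qed
  have "(\<Sum>x\<in>F. (1/2::real)^length (c x)) = (\<Sum>w\<in>c ` F. (1/2::real)^length w)"
    by (simp add: sum.reindex[OF inj])
  also have "\<dots> \<le> 1"
    by (rule kraft_finite) (use assms in \<open>auto simp: prefix_code_def, metis subsetD\<close>)
  finally show ?thesis .
qed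


fun bin :: "nat \<Rightarrow> nat \<Rightarrow> bool list" where
  "bin 0 n = []"
| "bin (Suc L) n = bin L (n div 2) @ [odd n]"

lemma length_bin[simp]: "length (bin L n) = L"
  by (induction L arbitrary: n) auto

lemma bin_inj_mod: "bin L a = bin L b \<Longrightarrow> a mod 2^L = b mod 2^L"
proof (induction L arbitrary: a b)
  case 0 then show ?case by simp
next
  case (Suc L)
  then have h1: "bin L (a div 2) = bin L (b div 2)" and h2: "odd a = odd b" by auto
  have "(a div 2) mod 2^L = (b div 2) mod 2^L" using Suc.IH h1 by blast
  moreover have "a mod 2 = b mod 2" using h2 by (metis odd_iff_mod_2_eq_one parity_cases)
  ultimately show ?case by (simp add: mod_mult2_eq)
qed

lemma bin_split: "bin (L + d) b = bin L (b div 2^d) @ bin d b"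
proof (induction d arbitrary: b)
  case 0 then show ?case by simp
next
  case (Suc d)
  have "bin (L + Suc d) b = bin (L + d) (b div 2) @ [odd b]" by simp
  also have "\<dots> = bin L (b div 2 div 2^d) @ bin d (b div 2) @ [odd b]" using Suc.IH by simp
  also have "b div 2 div 2^d = b div 2^(Suc d)" by (simp add: div_mult2_eq)
  finally show ?case by simp
qed

lemma bin_prefix:
  assumes "prefix (bin L1 a) (bin L2 b)" "a < 2^L1" "b < 2^L2"
  shows "L1 \<le> L2 \<and> a = b div 2^(L2 - L1)"
proof -
  have le: "L1 \<le> L2" using prefix_length_le[OF assms(1)] by simp
  define d where "d = L2 - L1"
  have L2: "L2 = L1 + d" using le d_def by simp
  have "bin L2 b = bin L1 (b div 2^d) @ bin d b" using L2 bin_split by simp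
  then have "prefix (bin L1 a) (bin L1 (b div 2^d) @ bin d b)" using assms(1) by simp
  then have "bin L1 a = bin L1 (b div 2^d)"
    by (metis append_eq_append_conv length_bin prefixE prefix_length_prefix prefix_order.antisym
        prefix_prefix prefix_order.order_refl)
  then have "a mod 2^L1 = (b div 2^d) mod 2^L1" by (rule bin_inj_mod)
  moreover have "b div 2^d < 2^L1"
  proof -
    have "b < 2^d * 2^L1" using assms(3) L2 by (simp add: power_add mult.commute)
    then show ?thesis by (simp add: less_mult_imp_div_less mult.commute)
  qed
  ultimately have "a = b div 2^d" using assms(2) by simp
  then show ?thesis using le d_def by simp
qed


lemma kraft_converse_list:
  fixes ys :: "'a list" and m :: "'a \<Rightarrow> nat"
  assumes dist: "distinct ys" and srt: "sorted (map m ys)"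
    and kr: "(\<Sum>x\<in>set ys. (1/2::real)^m x) \<le> 1"
  shows "\<exists>c::'a \<Rightarrow> bool list. (\<forall>x\<in>set ys. \<forall>y\<in>set ys. x \<noteq> y \<longrightarrow> \<not> prefix (c x) (c y)) \<and> (\<forall>x\<in>set ys. length (c x) = m x)"
proof -
  define n where "n = length ys"
  define M where "M p = m (ys ! p)" for p
  have mono: "M q \<le> M p" if "q \<le> p" "p < n" for p q
    using sorted_nth_mono[OF srt, of q p] that unfolding M_def n_def by simp
  have kr2: "(\<Sum>q<n. (1/2::real)^M q) \<le> 1"
  proof -
    have "set ys = (\<lambda>q. ys ! q) ` {..<n}" unfolding n_def by (auto simp: set_conv_nth)
    moreover have "inj_on (\<lambda>q. ys ! q) {..<n}" using dist unfolding n_def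
      by (simp add: inj_on_nth)
    ultimately have "(\<Sum>x\<in>set ys. (1/2::real)^m x) = (\<Sum>q<n. (1/2::real)^M q)"
      unfolding M_def by (simp add: sum.reindex)
    then show ?thesis using kr by simp
  qed
  define N where "N p = (\<Sum>q<p. (2::nat)^(M p - M q))" for p
  have pw: "(2::real)^(a - b) = 2^a * (1/2::real)^b" if "b \<le> a" for a b
  proof -
    have "(2::real)^(a-b) = 2^a / 2^b" using that by (simp add: power_diff)
    also have "\<dots> = 2^a*(1/2)^b" by (simp add: power_one_over)
    finally show ?thesis .
  qed
  have Nb: "N p < 2^(M p)" if "p < n" for p
  proof -
    have "real (N p) = (\<Sum>q<p. 2^(M p) * (1/2::real)^M q)"
      unfolding N_def of_nat_sum using mono that by (intro sum.cong) (auto simp: pw)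
    also have "\<dots> = 2^(M p) * (\<Sum>q<p. (1/2::real)^M q)" by (simp add: sum_distrib_left)
    also have "(\<Sum>q<p. (1/2::real)^M q) \<le> 1 - (1/2)^M p"
    proof -
      have "(\<Sum>q<p. (1/2::real)^M q) + (1/2)^M p = (\<Sum>q<Suc p. (1/2::real)^M q)" by simp
      also have "\<dots> \<le> (\<Sum>q<n. (1/2::real)^M q)"
        by (rule sum_mono2) (use that in auto)
      finally show ?thesis using kr2 by linarith
    qed
    then have "2^(M p) * (\<Sum>q<p. (1/2::real)^M q) \<le> 2^(M p) * (1 - (1/2)^M p)"
      by (intro mult_left_mono) auto
    also have "\<dots> = 2^(M p) - 1" by (simp add: right_diff_distrib power_one_over)
    finally have "real (N p) \<le> 2^(M p) - 1" .
    then have "real (N p) < (2::real)^(M p)" by linarith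
    then show ?thesis by (metis of_nat_less_iff of_nat_numeral of_nat_power)
  qed
  have Ng: "2^(M p - M q) * (N q + 1) \<le> N p" if "q < p" "p < n" for p q
  proof -
    have "2^(M p - M q) * (N q + 1) = 2^(M p - M q) * (\<Sum>q'<Suc q. (2::nat)^(M q - M q'))"
      unfolding N_def by simp
    also have "\<dots> = (\<Sum>q'<Suc q. (2::nat)^(M p - M q'))"
      unfolding sum_distrib_left
    proof (intro sum.cong refl)
      fix q' assume "q' \<in> {..<Suc q}"
      then have "M q' \<le> M q" "M q \<le> M p" using mono that by auto
      then show "2 ^ (M p - M q) * 2 ^ (M q - M q') = (2::nat) ^ (M p - M q')"
        by (simp flip: power_add)
    qed
    also have "\<dots> \<le> (\<Sum>q'<p. (2::nat)^(M p - M q'))"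
      by (rule sum_mono2) (use that in auto)
    finally show ?thesis unfolding N_def .
  qed
  define W where "W p = bin (M p) (N p)" for p
  have Wpf: "\<not> prefix (W q) (W p)" if "p < n" "q < n" "p \<noteq> q" for p q
  proof
    assume pr: "prefix (W q) (W p)"
    from bin_prefix[OF pr[unfolded W_def] Nb Nb] that
    have le: "M q \<le> M p" and eq: "N q = N p div 2^(M p - M q)" by auto
    show False
    proof (cases "q < p")
      case True
      have "2^(M p - M q) * (N q + 1) \<le> N p" using Ng True that by blast
      then have "(2^(M p - M q) * (N q + 1)) div 2^(M p - M q) \<le> N p div 2^(M p - M q)"
        by (rule div_le_mono)
      then have "N q + 1 \<le> N p div 2^(M p - M q)" by simp
      then show False using eq by simp
    next
      case False
      then have "p < q" using that by simp
      then have "M p \<le> M q" using mono that by simp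
      then have "M p = M q" using le by simp
      then have NE: "N q = N p" using eq by simp
      have E: "2^(M q - M p) * (N p + 1) \<le> N q" using Ng \<open>p < q\<close> that by blast
      have O: "(2::nat)^(M q - M p) = 1" using \<open>M p = M q\<close> by simp
      have "N p + 1 \<le> N p" using E unfolding O NE by simp
      then show False by simp
    qed
  qed
  define idx where "idx x = (SOME p. p < n \<and> ys ! p = x)" for x
  have idx: "idx x < n \<and> ys ! idx x = x" if "x \<in> set ys" for x
  proof -
    have "\<exists>p. p < n \<and> ys ! p = x" using that unfolding n_def by (simp add: in_set_conv_nth)
    then show ?thesis unfolding idx_def by (rule someI_ex)
  qed
  define c where "c x = W (idx x)" for x
  have A: "\<forall>x\<in>set ys. \<forall>y\<in>set ys. x \<noteq> y \<longrightarrow> \<not> prefix (c x) (c y)"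
  proof (intro ballI impI)
    fix x y assume xy: "x \<in> set ys" "y \<in> set ys" "x \<noteq> y"
    have "idx x \<noteq> idx y"
    proof
      assume "idx x = idx y"
      then have "ys ! idx x = ys ! idx y" by simp
      then show False using idx[OF xy(1)] idx[OF xy(2)] xy(3) by simp
    qed
    then show "\<not> prefix (c x) (c y)" unfolding c_def
      using Wpf[of "idx y" "idx x"] idx[OF xy(1)] idx[OF xy(2)] by auto
  qed
  have B: "\<forall>x\<in>set ys. length (c x) = m x"
    unfolding c_def W_def M_def using idx by simp
  show ?thesis using A B by blast
qed

lemma kraft_converse:
  fixes A :: "'a set" and m :: "'a \<Rightarrow> nat"
  assumes "finite A" "(\<Sum>x\<in>A. (1/2::real)^m x) \<le> 1"
  shows "\<exists>c. prefix_code A c \<and> (\<forall>x\<in>A. length (c x) = m x)"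
proof -
  obtain xs where xs: "set xs = A" "distinct xs" using finite_distinct_list[OF assms(1)] by blast
  define ys where "ys = sort_key m xs"
  have "set ys = A" "distinct ys" "sorted (map m ys)"
    unfolding ys_def using xs by (auto simp: distinct_sort sorted_sort_key)
  then show ?thesis using kraft_converse_list[of ys m] assms unfolding prefix_code_def by auto
qed


lemma unary_0[simp]: "unary 0 = [False]" by (simp add: unary_def)
lemma unary_Suc[simp]: "unary (Suc n) = True # unary n" by (simp add: unary_def)
lemma length_unary[simp]: "length (unary n) = Suc n" by (simp add: unary_def)

lemma unary_prefix: "prefix (unary a @ X) (unary b @ Y) \<Longrightarrow> a = b \<and> prefix X Y"
proof (induction a arbitrary: b)
  case 0
  then show ?case by (cases b) auto
next
  case (Suc a)
  then show ?case by (cases b) auto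
qed

lemma C_prefix_code:
  assumes k: "k \<ge> 1" and T: "prefix_code (alphabet_k k) T"
  shows "prefix_code UNIV (\<lambda>(i,j). T (i mod k, j mod k) @ unary (i div k) @ unary (j div k))"
  unfolding prefix_code_def
proof (intro ballI impI)
  fix x y :: "nat \<times> nat"
  assume "x \<in> UNIV" "y \<in> UNIV" and ne: "x \<noteq> y"
  obtain i j where x: "x = (i,j)" by (cases x)
  obtain i' j' where y: "y = (i',j')" by (cases y)
  define c where "c = (i mod k, j mod k)"
  define c' where "c' = (i' mod k, j' mod k)"
  have cA: "c \<in> alphabet_k k" "c' \<in> alphabet_k k"
    unfolding c_def c'_def alphabet_k_def using k by auto
  show "\<not> prefix ((\<lambda>(i,j). T (i mod k, j mod k) @ unary (i div k) @ unary (j div k)) x)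
                   ((\<lambda>(i,j). T (i mod k, j mod k) @ unary (i div k) @ unary (j div k)) y)"
  proof
    assume pr: "prefix ((\<lambda>(i,j). T (i mod k, j mod k) @ unary (i div k) @ unary (j div k)) x)
                   ((\<lambda>(i,j). T (i mod k, j mod k) @ unary (i div k) @ unary (j div k)) y)"
    then have pr': "prefix (T c @ unary (i div k) @ unary (j div k)) (T c' @ unary (i' div k) @ unary (j' div k))"
      unfolding x y c_def c'_def by simp
    show False
    proof (cases "c = c'")
      case False
      have p1: "prefix (T c) (T c' @ unary (i' div k) @ unary (j' div k))"
        using pr' by (rule append_prefixD)
      have p2: "prefix (T c') (T c' @ unary (i' div k) @ unary (j' div k))" by simp
      from prefix_same_cases[OF p1 p2] show False
        using T cA False unfolding prefix_code_def by metis
    next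
      case True
      then have "prefix (unary (i div k) @ unary (j div k)) (unary (i' div k) @ unary (j' div k))"
        using pr' by simp
      from unary_prefix[OF this] have a: "i div k = i' div k" and pb: "prefix (unary (j div k)) (unary (j' div k))"
        by auto
      from unary_prefix[of "j div k" "[]" "j' div k" "[]"] pb have b: "j div k = j' div k" by simp
      from True have "i mod k = i' mod k" "j mod k = j' mod k" unfolding c_def c'_def by auto
      then have "i = i'" "j = j'" using a b by (metis div_mult_mod_eq)+
      then show False using ne x y by simp
    qed
  qed
qed


definition gg :: "nat \<Rightarrow> nat \<Rightarrow> nat \<Rightarrow> nat \<Rightarrow> nat \<Rightarrow> nat \<Rightarrow> nat" where
  "gg k \<rho> i j r s = (if r+s+\<rho> < k then 1 else if r+s+\<rho> = k then (if r < i then 2 else 1)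
      else if r+s+\<rho> < 2*k then 2 else if r+s+\<rho> = 2*k then (if r < k+1-\<rho>+j then 3 else 2) else 3)"

definition NN :: "nat \<Rightarrow> nat \<Rightarrow> nat \<Rightarrow> nat \<Rightarrow> nat" where
  "NN k \<rho> i j = (\<Sum>(r,s)\<in>alphabet_k k. (2::nat)^(3 - gg k \<rho> i j r s))"

lemma sum_if_lt: "t \<le> n \<Longrightarrow> (\<Sum>s<n. if s < t then a else b) = a*t + b*(n-t::nat)"
proof (induction n)
  case 0 then show ?case by simp
next
  case (Suc n)
  show ?case
  proof (cases "t = Suc n")
    case True
    then have "(\<Sum>s<Suc n. if s < t then a else b) = (\<Sum>s<Suc n. a)" by (intro sum.cong) auto
    then show ?thesis using True by simp
  next
    case False
    then have "t \<le> n" using Suc.prems by simp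
    have "(\<Sum>s<Suc n. if s < t then a else b) = (\<Sum>s<n. if s < t then a else b) + b"
      using \<open>t \<le> n\<close> by simp
    also have "\<dots> = a*t + (b*(n-t) + b)" using Suc.IH \<open>t \<le> n\<close> by simp
    also have "b*(n-t) + b = b*(Suc n - t)" using \<open>t \<le> n\<close> by (simp add: Suc_diff_le)
    finally show ?thesis .
  qed
qed

lemma tri2: "(\<Sum>r<n. n - r) * 2 = n * (n + 1::nat)"
proof (induction n)
  case 0 then show ?case by simp
next
  case (Suc n)
  have "(\<Sum>r<Suc n. Suc n - r) = (\<Sum>r<n. Suc n - r) + 1" by simp
  also have "(\<Sum>r<n. Suc n - r) = (\<Sum>r<n. (n - r) + 1)"
    by (intro sum.cong) auto
  also have "\<dots> = (\<Sum>r<n. n - r) + n" by (subst sum.distrib) simp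
  finally show ?case using Suc.IH by (simp add: algebra_simps)
qed

lemma sum_alph: "(\<Sum>(r,s)\<in>alphabet_k k. f r s) = (\<Sum>r<k. \<Sum>s<k. f r s)"
  unfolding alphabet_k_def atLeast0LessThan by (simp add: sum.cartesian_product)

lemma NN1: "NN k 1 0 0 = 2*k^2 + k*(k+1)"
proof -
  have "NN k 1 0 0 = (\<Sum>r<k. \<Sum>s<k. if s < k - r then 4 else 2)"
    unfolding NN_def sum_alph
    by (intro sum.cong refl) (auto simp: gg_def)
  also have "\<dots> = (\<Sum>r<k. 2*k + 2*(k - r))"
    by (intro sum.cong refl) (auto simp: sum_if_lt)
  also have "\<dots> = 2*k^2 + 2 * (\<Sum>r<k. k - r)"
    by (simp add: sum.distrib sum_distrib_left power2_eq_square)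
  also have "\<dots> = 2*k^2 + k*(k+1)" using tri2[of k] by simp
  finally show ?thesis .
qed

lemma NNend: "2 * NN k (k+1) 0 0 = 2*k^2 + k*(k+1)"
proof -
  have "NN k (k+1) 0 0 = (\<Sum>r<k. \<Sum>s<k. if s < k - r then 2 else 1)"
    unfolding NN_def sum_alph
    by (intro sum.cong refl) (auto simp: gg_def)
  also have "\<dots> = (\<Sum>r<k. k + (k - r))"
    by (intro sum.cong refl) (auto simp: sum_if_lt)
  also have "\<dots> = (\<Sum>r<k. k) + (\<Sum>r<k. k - r)"
    by (rule sum.distrib)
  also have "\<dots> = k^2 + (\<Sum>r<k. k - r)" by (simp add: power2_eq_square)
  finally show ?thesis using tri2[of k] by simp
qed

lemma sum_one_point:
  fixes f g :: "'a \<Rightarrow> nat"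
  assumes "finite A" "z \<in> A" "\<And>c. c \<in> A \<Longrightarrow> c \<noteq> z \<Longrightarrow> f c = g c" "f z = g z + d"
  shows "sum f A = sum g A + d"
proof -
  have "sum f A = f z + sum f (A - {z})" using assms by (simp add: sum.remove)
  also have "sum f (A - {z}) = sum g (A - {z})" using assms(3) by (intro sum.cong) auto
  also have "sum g A = g z + sum g (A - {z})" using assms by (simp add: sum.remove)
  ultimately show ?thesis using assms(4) by simp
qed

lemma finite_alph: "finite (alphabet_k k)" unfolding alphabet_k_def by simp

lemma NN_stepi:
  assumes "1 \<le> \<rho>" "\<rho> \<le> k" "i < k+1-\<rho>"
  shows "NN k \<rho> i j = NN k \<rho> (Suc i) j + 2"
  unfolding NN_def
proof (rule sum_one_point[OF finite_alph, where z="(i, k-\<rho>-i)"])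
  show "(i, k-\<rho>-i) \<in> alphabet_k k" unfolding alphabet_k_def using assms by auto
  show "(case (i, k - \<rho> - i) of (r, s) \<Rightarrow> 2 ^ (3 - gg k \<rho> i j r s)) =
    (case (i, k - \<rho> - i) of (r, s) \<Rightarrow> 2 ^ (3 - gg k \<rho> (Suc i) j r s)) + (2::nat)"
    using assms by (simp add: gg_def)
  fix c assume "c \<in> alphabet_k k" "c \<noteq> (i, k - \<rho> - i)"
  then show "(case c of (r, s) \<Rightarrow> (2::nat) ^ (3 - gg k \<rho> i j r s)) =
    (case c of (r, s) \<Rightarrow> 2 ^ (3 - gg k \<rho> (Suc i) j r s))"
    using assms by (cases c) (auto simp: gg_def alphabet_k_def)
qed

lemma NN_stepj:
  assumes "1 \<le> \<rho>" "\<rho> \<le> k" "j < \<rho> - 1"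
  shows "NN k \<rho> i j = NN k \<rho> i (Suc j) + 1"
  unfolding NN_def
proof (rule sum_one_point[OF finite_alph, where z="(k+1-\<rho>+j, k-1-j)"])
  show "(k+1-\<rho>+j, k-1-j) \<in> alphabet_k k" unfolding alphabet_k_def using assms by auto
  show "(case (k+1-\<rho>+j, k-1-j) of (r, s) \<Rightarrow> 2 ^ (3 - gg k \<rho> i j r s)) =
    (case (k+1-\<rho>+j, k-1-j) of (r, s) \<Rightarrow> 2 ^ (3 - gg k \<rho> i (Suc j) r s)) + (1::nat)"
    using assms by (simp add: gg_def)
  fix c assume "c \<in> alphabet_k k" "c \<noteq> (k+1-\<rho>+j, k-1-j)"
  then show "(case c of (r, s) \<Rightarrow> (2::nat) ^ (3 - gg k \<rho> i j r s)) =
    (case c of (r, s) \<Rightarrow> 2 ^ (3 - gg k \<rho> i (Suc j) r s))"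
    using assms by (cases c) (auto simp: gg_def alphabet_k_def)
qed

lemma NN_stepr:
  assumes "1 \<le> \<rho>" "\<rho> \<le> k"
  shows "NN k (Suc \<rho>) 0 0 = NN k \<rho> (k+1-\<rho>) (\<rho>-1)"
  unfolding NN_def
proof (intro sum.cong refl)
  fix c assume "c \<in> alphabet_k k"
  then show "(case c of (r, s) \<Rightarrow> (2::nat) ^ (3 - gg k (Suc \<rho>) 0 0 r s)) =
    (case c of (r, s) \<Rightarrow> 2 ^ (3 - gg k \<rho> (k+1-\<rho>) (\<rho>-1) r s))"
    using assms by (cases c) (auto simp: gg_def alphabet_k_def)
qed

lemma NN_j:
  assumes "1 \<le> \<rho>" "\<rho> \<le> k" "j \<le> \<rho> - 1"
  shows "NN k \<rho> i j + j = NN k \<rho> i 0"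
  using assms(3)
proof (induction j)
  case 0 then show ?case by simp
next
  case (Suc j)
  then show ?case using NN_stepj[OF assms(1,2), of j i] by simp
qed

lemma NN_i:
  assumes "1 \<le> \<rho>" "\<rho> \<le> k" "i \<le> k + 1 - \<rho>"
  shows "NN k \<rho> i 0 + 2*i = NN k \<rho> 0 0"
  using assms(3)
proof (induction i)
  case 0 then show ?case by simp
next
  case (Suc i)
  then show ?case using NN_stepi[OF assms(1,2), of i 0] by simp
qed


lemma pow2_ex: "(n::nat) \<ge> 1 \<Longrightarrow> \<exists>e. 2^e \<le> n \<and> n < 2^(Suc e)"
proof (induction n rule: less_induct)
  case (less n)
  show ?case
  proof (cases "n = 1")
    case True then show ?thesis by (intro exI[of _ 0]) simp
  next
    case False
    then have "n div 2 \<ge> 1" "n div 2 < n" using less.prems by auto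
    then obtain e where e: "2^e \<le> n div 2" "n div 2 < 2^(Suc e)" using less.IH by blast
    have "2^(Suc e) \<le> n" using e(1) by simp
    moreover have "n < 2^(Suc (Suc e))" using e(2) by simp
    ultimately show ?thesis by blast
  qed
qed

lemma gg_range: "gg k \<rho> i j r s \<in> {1,2,3}" unfolding gg_def by auto

lemma gg_bounds:
  assumes "r < k" "s < k" "\<rho> \<le> k"
  shows "(gg k \<rho> i j r s - 1) * k \<le> r + s + \<rho> \<and> r + s + \<rho> \<le> gg k \<rho> i j r s * k"
  using assms unfolding gg_def by auto

lemma exists_m:
  assumes k: "k \<ge> 1"
  shows "\<exists>m::nat\<times>nat\<Rightarrow>nat. \<exists>J::nat. (\<Sum>c\<in>alphabet_k k. (1/2::real)^(m c)) = 1 \<and>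
          (\<forall>r<k. \<forall>s<k. k * m (r,s) \<le> J + r + s \<and> J + r + s \<le> k * (m (r,s) + 1))"
proof -
  define X2 where "X2 = 2*k^2 + k*(k+1)"
  have X2ge: "X2 \<ge> 4"
  proof -
    have "k^2 \<ge> 1" using k by simp
    moreover have "k*(k+1) \<ge> 1*2" using k by (intro mult_mono) auto
    ultimately show ?thesis unfolding X2_def by linarith
  qed
  obtain e where e: "2^e \<le> X2" "X2 < 2^(Suc e)" using pow2_ex[of X2] X2ge by auto
  define P where "P = (2::nat)^e"
  have e2: "e \<ge> 2"
  proof (rule ccontr)
    assume "\<not> e \<ge> 2"
    then have "(2::nat)^(Suc e) \<le> 2^2" by (intro power_increasing) auto
    then show False using e(2) X2ge by simp
  qed
  have Pev: "even P" unfolding P_def using e2 by simp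
  have end_lt: "NN k (Suc k) 0 0 < P"
    using NNend[of k] e(2) unfolding P_def X2_def by simp
  define S where "S = {\<rho> \<in> {1..k}. P \<le> NN k \<rho> 0 0}"
  have S1: "1 \<in> S" unfolding S_def using k NN1[of k] e(1) unfolding P_def X2_def by simp
  have fS: "finite S" unfolding S_def by simp
  define \<rho> where "\<rho> = Max S"
  have \<rho>S: "\<rho> \<in> S" unfolding \<rho>_def using fS S1 Max_in by blast
  then have \<rho>1: "1 \<le> \<rho>" and \<rho>k: "\<rho> \<le> k" and Pl: "P \<le> NN k \<rho> 0 0" unfolding S_def by auto
  have nxt: "NN k (Suc \<rho>) 0 0 < P"
  proof (cases "Suc \<rho> \<le> k")
    case True
    have "Suc \<rho> \<notin> S"
    proof
      assume "Suc \<rho> \<in> S"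
      then have "Suc \<rho> \<le> \<rho>" unfolding \<rho>_def using fS Max_ge by blast
      then show False by simp
    qed
    then show ?thesis unfolding S_def using True by auto
  next
    case False
    then have "\<rho> = k" using \<rho>k by simp
    then show ?thesis using end_lt by simp
  qed
  define I where "I = k + 1 - \<rho>"
  define Jm where "Jm = \<rho> - 1"
  have eqs: "NN k \<rho> 0 0 = NN k (Suc \<rho>) 0 0 + 2*I + Jm"
    using NN_stepr[OF \<rho>1 \<rho>k] NN_j[OF \<rho>1 \<rho>k, of Jm I] NN_i[OF \<rho>1 \<rho>k, of I]
    unfolding I_def Jm_def by simp
  define D where "D = NN k \<rho> 0 0 - P"
  have Dlt: "D < 2*I + Jm" using eqs nxt Pl unfolding D_def by simp
  define i where "i = min (D div 2) I"
  define j where "j = D - 2*i"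
  have iI: "i \<le> I" unfolding i_def by simp
  have jJ: "j \<le> Jm"
  proof (cases "D div 2 \<le> I")
    case True
    then have ji: "j = D mod 2" unfolding j_def i_def using div_mult_mod_eq[of D 2] by linarith
    show ?thesis
    proof (cases "\<rho> = 1")
      case True
      have "even (NN k \<rho> 0 0)" using True NN1[of k] by simp
      then have "even D" unfolding D_def using Pev Pl by simp
      then show ?thesis using ji by simp
    next
      case False
      then show ?thesis using ji \<rho>1 unfolding Jm_def by simp
    qed
  next
    case False
    then have "i = I" unfolding i_def by simp
    then show ?thesis using Dlt unfolding j_def by simp
  qed
  have 2: "2*i \<le> D" unfolding i_def by linarith
  have NNP: "NN k \<rho> i j = P"
  proof -
    have "NN k \<rho> i j + j = NN k \<rho> i 0" using NN_j[OF \<rho>1 \<rho>k] jJ unfolding Jm_def by simp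
    moreover have "NN k \<rho> i 0 + 2*i = NN k \<rho> 0 0" using NN_i[OF \<rho>1 \<rho>k] iI unfolding I_def by simp
    ultimately show ?thesis using 2 Pl unfolding j_def D_def by simp
  qed
  define m where "m c = e + gg k \<rho> i j (fst c) (snd c) - 3" for c
  have kr: "(\<Sum>c\<in>alphabet_k k. (1/2::real)^(m c)) = 1"
  proof -
    have "(1/2::real)^(m c) = real ((2::nat)^(3 - gg k \<rho> i j (fst c) (snd c))) / 2^e" for c
    proof -
      define g where "g = gg k \<rho> i j (fst c) (snd c)"
      have g: "g \<in> {1,2,3}" unfolding g_def by (rule gg_range)
      have "(2::real)^e * (1/2)^(m c) = 2^(3 - g)"
      proof -
        have "e = (e + g - 3) + (3 - g)" using g e2 by auto
        then have "(2::real)^e = 2^(e+g-3) * 2^(3-g)" by (metis power_add)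
        then show ?thesis unfolding m_def g_def[symmetric] by (simp add: power_one_over)
      qed
      then show ?thesis unfolding g_def by (simp add: field_simps)
    qed
    then have "(\<Sum>c\<in>alphabet_k k. (1/2::real)^(m c)) =
        (\<Sum>c\<in>alphabet_k k. real ((2::nat)^(3 - gg k \<rho> i j (fst c) (snd c)))) / 2^e"
      by (simp add: sum_divide_distrib)
    also have "(\<Sum>c\<in>alphabet_k k. real ((2::nat)^(3 - gg k \<rho> i j (fst c) (snd c)))) = real (NN k \<rho> i j)"
      unfolding NN_def of_nat_sum by (intro sum.cong) auto
    finally show ?thesis using NNP unfolding P_def by simp
  qed
  have sw: "\<forall>r<k. \<forall>s<k. k * m (r,s) \<le> (\<rho> + k*(e-2)) + r + s \<and> (\<rho> + k*(e-2)) + r + s \<le> k * (m (r,s) + 1)"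
  proof (intro allI impI)
    fix r s assume rs: "r < k" "s < k"
    define g where "g = gg k \<rho> i j r s"
    have g: "g \<in> {1,2,3}" unfolding g_def by (rule gg_range)
    have b: "(g - 1) * k \<le> r + s + \<rho>" "r + s + \<rho> \<le> g * k"
      using gg_bounds[OF rs \<rho>k, of i j] unfolding g_def by auto
    have mr: "m (r,s) = e + g - 3" unfolding m_def g_def by simp
    obtain e' where e': "e = e' + 2" using e2 by (metis add.commute le_Suc_ex)
    show "k * m (r,s) \<le> (\<rho> + k*(e-2)) + r + s \<and> (\<rho> + k*(e-2)) + r + s \<le> k * (m (r,s) + 1)"
      using g b unfolding mr e' by (auto simp: algebra_simps)
  qed
  show ?thesis using kr sw by blast
qed


lemma sum_lessThan_add:
  fixes m n :: nat
  shows "(\<Sum>i<m+n. f i) = (\<Sum>i<m. f i) + (\<Sum>i<n. f (m+i))"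
  by (induction n) (simp_all add: add.assoc)

lemma lin_aux: "1 - h \<le> d/2 \<Longrightarrow> 0 \<le> h \<Longrightarrow> 0 \<le> d \<Longrightarrow> 1 - h/2 \<le> (d+1)/(2::real)"
  by (simp add: field_simps)

lemma aux_ineq1: "1 - (1/2::real)^d \<le> d / 2"
proof (induction d)
  case 0 then show ?case by simp
next
  case (Suc d)
  have e: "(1/2::real)^Suc d = (1/2)^d/2" by simp
  have f: "real (Suc d) = real d + 1" by simp
  have g: "(0::real) \<le> (1/2)^d" by simp
  have "0 \<le> real d" by simp
  then show ?case unfolding e f using g Suc.IH lin_aux by blast
qed

lemma aux_ineq2: "real d \<le> 2^d - 1"
proof (induction d)
  case 0 then show ?case by simp
next
  case (Suc d)
  have "(1::real) \<le> 2^d" by simp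
  then show ?case using Suc.IH by simp
qed

lemma sum_blocks:
  fixes k N :: nat
  shows "(\<Sum>i<k*N. f i) = (\<Sum>a<N. \<Sum>r<k. f (a*k + r))"
proof (induction N)
  case 0 then show ?case by simp
next
  case (Suc N)
  have "(\<Sum>i<k*Suc N. f i) = (\<Sum>i<k*N + k. f i)" by (simp add: add.commute)
  also have "\<dots> = (\<Sum>i<k*N. f i) + (\<Sum>r<k. f (k*N + r))" by (rule sum_lessThan_add)
  finally show ?case using Suc.IH by (simp add: mult.commute)
qed

lemma regroup:
  fixes f :: "nat \<Rightarrow> nat \<Rightarrow> 'a::comm_monoid_add"
  shows "(\<Sum>x\<in>{..<k*N}\<times>{..<k*N}. f (fst x) (snd x)) =
         (\<Sum>(r,s)\<in>alphabet_k k. \<Sum>(a,b)\<in>{..<N}\<times>{..<N}. f (a*k+r) (b*k+s))"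
proof -
  have "(\<Sum>x\<in>{..<k*N}\<times>{..<k*N}. f (fst x) (snd x)) = (\<Sum>i<k*N. \<Sum>j<k*N. f i j)"
    by (simp add: sum.cartesian_product case_prod_beta)
  also have "\<dots> = (\<Sum>a<N. \<Sum>r<k. \<Sum>b<N. \<Sum>s<k. f (a*k+r) (b*k+s))"
    by (simp add: sum_blocks)
  also have "\<dots> = (\<Sum>r<k. \<Sum>a<N. \<Sum>s<k. \<Sum>b<N. f (a*k+r) (b*k+s))"
    by (subst sum.swap) (simp add: sum.swap[of _ "{..<k}" "{..<N}"])
  also have "\<dots> = (\<Sum>r<k. \<Sum>s<k. \<Sum>a<N. \<Sum>b<N. f (a*k+r) (b*k+s))"
    by (simp add: sum.swap[of _ "{..<k}" "{..<N}"])
  also have "\<dots> = (\<Sum>r<k. \<Sum>s<k. \<Sum>(a,b)\<in>{..<N}\<times>{..<N}. f (a*k+r) (b*k+s))"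
    by (simp only: sum.cartesian_product)
  also have "\<dots> = (\<Sum>(r,s)\<in>alphabet_k k. \<Sum>(a,b)\<in>{..<N}\<times>{..<N}. f (a*k+r) (b*k+s))"
    unfolding alphabet_k_def atLeast0LessThan by (rule sum.cartesian_product)
  finally show ?thesis .
qed

lemma geo_half: "(\<Sum>a<N. (1/2::real)^(a+1)) = 1 - (1/2)^N"
  by (induction N) (simp_all add: field_simps)

lemma dual_pt:
  fixes y :: real and n L :: nat
  assumes "(1/2)^(L+1) \<le> y" "y \<le> (1/2)^L"
  shows "y * L + (1/2)^L \<le> y * n + (1/2)^n"
proof (cases "L \<le> n")
  case True
  then obtain d where n: "n = L + d" by (metis le_add_diff_inverse)
  have eq: "(1/2::real)^L - (1/2)^n = (1/2)^L * (1 - (1/2)^d)" unfolding n by (simp add: power_add algebra_simps)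
  have "1 - (1/2::real)^d \<le> d / 2" by (rule aux_ineq1)
  then have "(1/2::real)^L * (1 - (1/2)^d) \<le> (1/2)^L * (d/2)" by (intro mult_left_mono) auto
  also have "\<dots> = (1/2)^(L+1) * d" by simp
  also have "\<dots> \<le> y * d" using assms(1) by (intro mult_right_mono) auto
  finally have "(1/2::real)^L - (1/2)^n \<le> y * d" unfolding eq .
  then show ?thesis unfolding n by (simp add: algebra_simps)
next
  case False
  then obtain d where L: "L = n + d" by (metis le_add_diff_inverse nat_le_linear)
  have "y * d \<le> (1/2)^L * d" using assms(2) by (intro mult_right_mono) auto
  also have "(1/2::real)^L * d \<le> (1/2)^L * (2^d - 1)"
    using aux_ineq2[of d] by (intro mult_left_mono) auto
  also have "\<dots> = (1/2)^n - (1/2)^L" unfolding L by (simp add: power_add field_simps)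
  finally have "y * d \<le> (1/2)^n - (1/2)^L" .
  then show ?thesis unfolding L by (simp add: algebra_simps)
qed


lemma nn_fin_sum:
  assumes "finite F"
  shows "(\<integral>\<^sup>+x. f x * indicator F x \<partial>count_space UNIV) = (\<Sum>x\<in>F. f x)"
proof -
  have "integral\<^sup>N (count_space F) f = (\<integral>\<^sup>+x. f x * indicator F x \<partial>count_space UNIV)"
    by (cases "F = UNIV") (simp_all add: nn_integral_count_space_indicator)
  then show ?thesis using nn_integral_count_space_finite[OF assms, of f] by simp
qed

lemma nn_ge_fin:
  assumes "finite F" "\<And>x. 0 \<le> g x"
  shows "ennreal (\<Sum>x\<in>F. g x) \<le> (\<integral>\<^sup>+x. ennreal (g x) \<partial>count_space UNIV)"
proof -
  have "ennreal (\<Sum>x\<in>F. g x) = (\<Sum>x\<in>F. ennreal (g x))" using assms by (simp add: sum_ennreal)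
  also have "\<dots> = (\<integral>\<^sup>+x. ennreal (g x) * indicator F x \<partial>count_space UNIV)"
    using nn_fin_sum[OF assms(1)] by simp
  also have "\<dots> \<le> (\<integral>\<^sup>+x. ennreal (g x) \<partial>count_space UNIV)"
    by (intro nn_integral_mono) (simp add: indicator_def)
  finally show ?thesis .
qed

lemma nn_SUP:
  fixes g :: "nat \<times> nat \<Rightarrow> real" and k :: nat
  assumes k: "k \<ge> 1" and g: "\<And>x. 0 \<le> g x"
  shows "(\<integral>\<^sup>+x. ennreal (g x) \<partial>count_space UNIV) = (SUP N. ennreal (\<Sum>x\<in>{..<k*N}\<times>{..<k*N}. g x))"
proof -
  define FN where "FN N = {..<k*N}\<times>{..<k*N}" for N
  define f where "f N x = ennreal (g x) * indicator (FN N) x" for N x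
  have mono: "FN N \<subseteq> FN M" if "N \<le> M" for N M
    unfolding FN_def using that by (auto intro: less_le_trans)
  have inc: "incseq f"
    unfolding incseq_def le_fun_def f_def
    by (auto simp: indicator_def dest: mono[THEN subsetD])
  have sup: "(SUP N. f N x) = ennreal (g x)" for x
  proof (rule antisym)
    show "(SUP N. f N x) \<le> ennreal (g x)"
      by (rule SUP_least) (simp add: f_def indicator_def)
    obtain i j where x: "x = (i,j)" by (cases x)
    define N0 where "N0 = Suc (max i j)"
    have "i < k*N0" "j < k*N0" unfolding N0_def using k
      by (metis le_imp_less_Suc less_le_trans max.cobounded1 max.cobounded2 mult_le_mono1 nat_mult_1)+
    then have "x \<in> FN N0" unfolding FN_def x by simp
    then have "f N0 x = ennreal (g x)" unfolding f_def by simp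
    then show "ennreal (g x) \<le> (SUP N. f N x)" by (metis SUP_upper UNIV_I)
  qed
  have "(\<integral>\<^sup>+x. ennreal (g x) \<partial>count_space UNIV) = (\<integral>\<^sup>+x. (SUP N. f N x) \<partial>count_space UNIV)"
    by (simp add: sup)
  also have "\<dots> = (SUP N. integral\<^sup>N (count_space UNIV) (f N))"
    by (rule nn_integral_monotone_convergence_SUP[OF inc]) simp
  also have "\<dots> = (SUP N. ennreal (\<Sum>x\<in>FN N. g x))"
  proof -
    have "integral\<^sup>N (count_space UNIV) (f N) = ennreal (\<Sum>x\<in>FN N. g x)" for N
    proof -
      have "integral\<^sup>N (count_space UNIV) (f N) = (\<Sum>x\<in>FN N. ennreal (g x))"
        unfolding f_def by (rule nn_fin_sum) (simp add: FN_def)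
      also have "\<dots> = ennreal (\<Sum>x\<in>FN N. g x)" using g by (simp add: sum_ennreal)
      finally show ?thesis .
    qed
    then show ?thesis by simp
  qed
  finally show ?thesis unfolding FN_def .
qed


lemma q_pow_mult: "q^k = (1/2::real) \<Longrightarrow> q^(k*n) = (1/2)^n"
proof -
  assume h: "q^k = (1/2::real)"
  show ?thesis unfolding power_mult h by (rule refl)
qed

lemma mod_div_simps:
  assumes "r < (k::nat)"
  shows "(a*k + r) mod k = r" "(a*k + r) div k = a"
  using assms by (simp_all add: div_add1_eq)

lemma main_bound:
  fixes k J :: nat and q :: real and T :: "nat \<times> nat \<Rightarrow> bool list" and m :: "nat \<times> nat \<Rightarrow> nat"
    and d :: "nat \<times> nat \<Rightarrow> bool list"
  assumes k: "k \<ge> 1" and q0: "0 < q" and q1: "q < 1" and qk: "q^k = 1/2"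
    and kr: "(\<Sum>c\<in>alphabet_k k. (1/2::real)^(m c)) = 1"
    and sw: "\<forall>r<k. \<forall>s<k. k*m(r,s) \<le> J + r + s \<and> J + r + s \<le> k*(m(r,s)+1)"
    and Fle: "(\<Sum>(r,s)\<in>alphabet_k k. q^(r+s) * real (length (T (r,s))))
              \<le> (\<Sum>(r,s)\<in>alphabet_k k. q^(r+s) * real (m (r,s)))"
    and d: "prefix_code UNIV d"
  shows "expected_len q (\<lambda>(i,j). T (i mod k, j mod k) @ unary (i div k) @ unary (j div k)) \<le> expected_len q d"
proof -
  define C where "C = (\<lambda>(i,j). T (i mod k, j mod k) @ unary (i div k) @ unary (j div k))"
  define w where "w x = (1-q)^2 * q^(fst x + snd x)" for x :: "nat \<times> nat"
  define lS where "lS x = m (fst x mod k, snd x mod k) + fst x div k + snd x div k + 2" for x :: "nat \<times> nat"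
  define lam where "lam = (1-q)^2 * (1/q)^(J + 2*k)"
  define FN where "FN N = {..<k*N}\<times>{..<k*N}" for N
  have w0: "0 \<le> w x" for x unfolding w_def using q0 by simp
  have lam0: "0 \<le> lam" unfolding lam_def using q0 by simp
  have TD: "TDGD q x = w x" for x unfolding TDGD_def w_def by (cases x) simp
  have kpos: "0 < k" using k by simp
  \<comment> \<open>pointwise dual inequality\<close>
  have pt: "w x * lS x + lam * (1/2)^(lS x) \<le> w x * n + lam * (1/2)^n" for x n
  proof -
    obtain i j where x: "x = (i,j)" by (cases x)
    define r where "r = i mod k"
    define s where "s = j mod k"
    define a where "a = i div k"
    define b where "b = j div k"
    have rk: "r < k" "s < k" unfolding r_def s_def using kpos by auto
    have ij: "i = a*k + r" "j = b*k + s" unfolding r_def s_def a_def b_def by simp_all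
    define L where "L = lS x"
    have L: "L = m (r,s) + a + b + 2" unfolding L_def lS_def x r_def s_def a_def b_def by simp
    define t where "t = J + 2*k + (i + j)"
    have swrs: "k*m(r,s) \<le> J + r + s" "J + r + s \<le> k*(m(r,s)+1)" using sw rk by auto
    have b1: "k*L \<le> t" unfolding L t_def ij using swrs by (simp add: algebra_simps)
    have b2: "t \<le> k*(L+1)" unfolding L t_def ij using swrs by (simp add: algebra_simps)
    have y1: "(1/2::real)^(L+1) \<le> q^t"
    proof -
      have "(1/2::real)^(L+1) = q^(k*(L+1))" by (rule q_pow_mult[OF qk, symmetric])
      also have "q^(k*(L+1)) \<le> q^t" using b2 q0 q1 by (intro power_decreasing) auto
      finally show ?thesis .
    qed
    have y2: "q^t \<le> (1/2::real)^L"
    proof -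
      have "q^t \<le> q^(k*L)" using b1 q0 q1 by (intro power_decreasing) auto
      also have "q^(k*L) = (1/2::real)^L" by (rule q_pow_mult[OF qk])
      finally show ?thesis .
    qed
    have D: "q^t * L + (1/2)^L \<le> q^t * n + (1/2)^n" by (rule dual_pt[OF y1 y2])
    have c0: "0 \<le> lam" by (rule lam0)
    have ineq: "lam * (q^t * L + (1/2)^L) \<le> lam * (q^t * n + (1/2)^n)" using D c0 by (rule mult_left_mono)
    have cq: "lam * q^t = w x"
    proof -
      have "q^t = q^(J + 2*k) * q^(i+j)" unfolding t_def by (simp add: power_add)
      then have "(1/q)^(J + 2*k) * q^t = q^(i+j)" using q0 by (simp add: power_one_over)
      then show ?thesis unfolding lam_def w_def x by simp
    qed
    have e1: "lam * (q^t * L + (1/2)^L) = (lam * q^t) * L + lam * (1/2)^L" by (simp add: algebra_simps)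
    have e2: "lam * (q^t * n + (1/2)^n) = (lam * q^t) * n + lam * (1/2)^n" by (simp add: algebra_simps)
    from ineq[unfolded e1 e2 cq] show ?thesis unfolding L_def .
  qed
  have geo2: "(\<Sum>(a,b)\<in>{..<N}\<times>{..<N}. (1/2::real)^(a+b+2)) = (1 - (1/2)^N)^2" for N
  proof -
    have "(\<Sum>(a,b)\<in>{..<N}\<times>{..<N}. (1/2::real)^(a+b+2)) = (\<Sum>a<N. \<Sum>b<N. (1/2::real)^(a+1) * (1/2)^(b+1))"
      by (simp add: sum.cartesian_product[symmetric] power_add)
    also have "\<dots> = (\<Sum>a<N. (1/2::real)^(a+1)) * (\<Sum>b<N. (1/2)^(b+1))"
      by (simp add: sum_product)
    finally show ?thesis by (simp only: geo_half power2_eq_square)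
  qed
  have S2: "(\<Sum>x\<in>FN N. (1/2::real)^(lS x)) = (1 - (1/2)^N)^2" for N
  proof -
    have "(\<Sum>x\<in>FN N. (1/2::real)^(lS x)) =
        (\<Sum>(r,s)\<in>alphabet_k k. \<Sum>(a,b)\<in>{..<N}\<times>{..<N}. (1/2::real)^(lS (a*k+r, b*k+s)))"
      unfolding FN_def using regroup[of "\<lambda>i j. (1/2::real)^(lS (i,j))" k N] by simp
    also have "\<dots> = (\<Sum>(r,s)\<in>alphabet_k k. (1/2::real)^(m (r,s)) * (1 - (1/2)^N)^2)"
    proof (intro sum.cong refl)
      fix c assume "c \<in> alphabet_k k"
      then obtain r s where c: "c = (r,s)" "r < k" "s < k" unfolding alphabet_k_def by auto
      have "(\<Sum>(a,b)\<in>{..<N}\<times>{..<N}. (1/2::real)^(lS (a*k+r, b*k+s))) =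
            (\<Sum>(a,b)\<in>{..<N}\<times>{..<N}. (1/2::real)^(m (r,s)) * (1/2)^(a+b+2))"
        by (intro sum.cong refl) (auto simp: lS_def mod_div_simps c power_add)
      also have "\<dots> = (\<Sum>x\<in>{..<N}\<times>{..<N}. (1/2::real)^(m (r,s)) * (case x of (a,b) \<Rightarrow> (1/2)^(a+b+2)))"
        by (intro sum.cong) auto
      also have "\<dots> = (1/2::real)^(m (r,s)) * (\<Sum>(a,b)\<in>{..<N}\<times>{..<N}. (1/2)^(a+b+2))"
        by (simp only: sum_distrib_left)
      also have "\<dots> = (1/2::real)^(m (r,s)) * (1 - (1/2)^N)^2" by (simp only: geo2)
      finally show "(case c of (r,s) \<Rightarrow> \<Sum>(a,b)\<in>{..<N}\<times>{..<N}. (1/2::real)^(lS (a*k+r, b*k+s))) =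
          (case c of (r,s) \<Rightarrow> (1/2::real)^(m (r,s)) * (1 - (1/2)^N)^2)" using c by simp
    qed
    also have "\<dots> = (\<Sum>c\<in>alphabet_k k. (1/2::real)^(m c)) * (1 - (1/2)^N)^2"
      by (simp add: sum_distrib_right case_prod_beta)
    finally show ?thesis using kr by simp
  qed
  have S3: "(\<Sum>x\<in>FN N. w x * length (C x)) \<le> (\<Sum>x\<in>FN N. w x * lS x)" for N
  proof -
    define G where "G = (\<Sum>(a,b)\<in>{..<N}\<times>{..<N}. (1-q)^2 * (1/2::real)^(a+b))"
    have G0: "0 \<le> G" unfolding G_def by (intro sum_nonneg) auto
    have diff: "(\<Sum>x\<in>FN N. w x * length (C x)) - (\<Sum>x\<in>FN N. w x * lS x) =
        (\<Sum>x\<in>FN N. w x * (real (length (C x)) - real (lS x)))"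
      by (simp add: sum_subtractf right_diff_distrib)
    also have "\<dots> = (\<Sum>(r,s)\<in>alphabet_k k. \<Sum>(a,b)\<in>{..<N}\<times>{..<N}.
          w (a*k+r, b*k+s) * (real (length (C (a*k+r, b*k+s))) - real (lS (a*k+r, b*k+s))))"
      unfolding FN_def using regroup[of "\<lambda>i j. w (i,j) * (real (length (C (i,j))) - real (lS (i,j)))" k N]
      by simp
    also have "\<dots> = (\<Sum>(r,s)\<in>alphabet_k k. G * (q^(r+s) * (real (length (T (r,s))) - real (m (r,s)))))"
    proof (intro sum.cong refl)
      fix c assume "c \<in> alphabet_k k"
      then obtain r s where c: "c = (r,s)" "r < k" "s < k" unfolding alphabet_k_def by auto
      have "(\<Sum>(a,b)\<in>{..<N}\<times>{..<N}. w (a*k+r, b*k+s) * (real (length (C (a*k+r, b*k+s))) - real (lS (a*k+r, b*k+s))))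
          = (\<Sum>(a,b)\<in>{..<N}\<times>{..<N}. ((1-q)^2 * (1/2::real)^(a+b)) * (q^(r+s) * (real (length (T (r,s))) - real (m (r,s)))))"
      proof (intro sum.cong refl)
        fix ab assume "ab \<in> {..<N}\<times>{..<N}"
        obtain a b where ab: "ab = (a,b)" by (cases ab)
        have qq: "q^(a*k+r + (b*k+s)) = (1/2)^(a+b) * q^(r+s)"
        proof -
          have "q^(a*k+r + (b*k+s)) = q^(k*(a+b)) * q^(r+s)" by (simp add: power_add[symmetric] algebra_simps)
          then show ?thesis using q_pow_mult[OF qk, of "a+b"] by simp
        qed
        have "w (a*k+r, b*k+s) = (1-q)^2 * ((1/2)^(a+b) * q^(r+s))" unfolding w_def using qq by simp
        moreover have "real (length (C (a*k+r, b*k+s))) - real (lS (a*k+r, b*k+s)) =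
            real (length (T (r,s))) - real (m (r,s))"
          unfolding C_def lS_def using c by (simp add: mod_div_simps unary_def)
        ultimately show "(case ab of (a,b) \<Rightarrow> w (a*k+r, b*k+s) * (real (length (C (a*k+r, b*k+s))) - real (lS (a*k+r, b*k+s))))
          = (case ab of (a,b) \<Rightarrow> ((1-q)^2 * (1/2::real)^(a+b)) * (q^(r+s) * (real (length (T (r,s))) - real (m (r,s)))))"
          unfolding ab by simp
      qed
      also have "\<dots> = G * (q^(r+s) * (real (length (T (r,s))) - real (m (r,s))))"
        unfolding G_def by (simp add: sum_distrib_right case_prod_beta)
      finally show "(case c of (r,s) \<Rightarrow> \<Sum>(a,b)\<in>{..<N}\<times>{..<N}. w (a*k+r, b*k+s) * (real (length (C (a*k+r, b*k+s))) - real (lS (a*k+r, b*k+s))))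
          = (case c of (r,s) \<Rightarrow> G * (q^(r+s) * (real (length (T (r,s))) - real (m (r,s)))))" using c by simp
    qed
    also have "\<dots> = G * ((\<Sum>(r,s)\<in>alphabet_k k. q^(r+s) * real (length (T (r,s)))) -
                         (\<Sum>(r,s)\<in>alphabet_k k. q^(r+s) * real (m (r,s))))"
      by (simp add: sum_distrib_left sum_subtractf case_prod_beta right_diff_distrib)
    also have "\<dots> \<le> 0" using G0 Fle by (simp add: mult_nonneg_nonpos)
    finally show ?thesis by simp
  qed
  have S4: "(\<Sum>x\<in>FN N. (1/2::real)^(length (d x))) \<le> 1" for N
    by (rule kraft_code[OF d]) (auto simp: FN_def)
  define aN where "aN N = (\<Sum>x\<in>FN N. w x * length (C x))" for N
  define bN where "bN N = (\<Sum>x\<in>FN N. w x * length (d x))" for N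
  have comb: "aN N \<le> bN N + 2 * lam * (1/2)^N" for N
  proof -
    have "(\<Sum>x\<in>FN N. w x * lS x + lam * (1/2)^(lS x)) \<le> (\<Sum>x\<in>FN N. w x * length (d x) + lam * (1/2)^(length (d x)))"
      by (intro sum_mono pt)
    then have "(\<Sum>x\<in>FN N. w x * lS x) + lam * (1 - (1/2)^N)^2 \<le> bN N + lam * (\<Sum>x\<in>FN N. (1/2::real)^(length (d x)))"
      unfolding bN_def by (simp add: sum.distrib sum_distrib_left[symmetric] S2)
    also have "\<dots> \<le> bN N + lam" using S4[of N] lam0 by (simp add: mult_left_le)
    finally have "(\<Sum>x\<in>FN N. w x * lS x) \<le> bN N + lam * (1 - (1 - (1/2)^N)^2)" by (simp add: algebra_simps)
    moreover have "lam * (1 - (1 - (1/2::real)^N)^2) \<le> 2 * lam * (1/2)^N"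
    proof -
      have "1 - (1 - (1/2::real)^N)^2 = 2 * (1/2)^N - ((1/2)^N)^2" by (simp add: power2_eq_square algebra_simps)
      also have "\<dots> \<le> 2 * (1/2)^N" by simp
      finally show ?thesis using lam0 by (metis mult.assoc mult.commute mult_left_mono)
    qed
    ultimately show ?thesis using S3[of N] unfolding aN_def by linarith
  qed
  have amono: "aN N \<le> aN M" if "N \<le> M" for N M
    unfolding aN_def FN_def
    by (rule sum_mono2) (use that w0 in \<open>auto intro: less_le_trans mult_le_mono2\<close>)
  have ECd: "ennreal (bN N) \<le> expected_len q d" for N
    unfolding expected_len_def bN_def TD
    by (rule nn_ge_fin) (auto simp: FN_def w0)
  have EC: "expected_len q C = (SUP N. ennreal (aN N))"
    unfolding expected_len_def aN_def FN_def TD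
    by (rule nn_SUP[OF k]) (simp add: w0)
  have "ennreal (aN N) \<le> expected_len q d" for N
  proof (rule ennreal_le_epsilon)
    fix e :: real assume e: "0 < e"
    obtain M0 where M0: "(1/2::real)^M0 < e / (2*lam + 1)"
      using real_arch_pow_inv[of "e / (2*lam + 1)" "1/2"] e lam0 by auto
    define M where "M = max N M0"
    have "(1/2::real)^M \<le> (1/2)^M0" unfolding M_def by (intro power_decreasing) auto
    then have "(1/2::real)^M \<le> e / (2*lam+1)" using M0 by linarith
    then have "2 * lam * (1/2::real)^M \<le> 2 * lam * (e / (2*lam+1))"
      using lam0 by (intro mult_left_mono) auto
    also have "\<dots> \<le> e" using e lam0 by (simp add: field_simps)
    finally have "2 * lam * (1/2::real)^M \<le> e" .
    then have "aN N \<le> bN M + e" using amono[of N M] comb[of M] unfolding M_def by simp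
    then have "ennreal (aN N) \<le> ennreal (bN M + e)" by (rule ennreal_leI)
    also have "\<dots> = ennreal (bN M) + ennreal e"
    proof -
      have "0 \<le> bN M" unfolding bN_def using w0 by (intro sum_nonneg) simp
      then show ?thesis using e by (simp add: ennreal_plus)
    qed
    also have "\<dots> \<le> expected_len q d + ennreal e" using ECd[of M] by (rule add_right_mono)
    finally show "ennreal (aN N) \<le> expected_len q d + ennreal e" .
  qed
  then have "expected_len q C \<le> expected_len q d" unfolding EC by (rule SUP_least)
  then show ?thesis unfolding C_def .
qed


theorem theorem2:
  fixes k :: nat and T :: "nat \<times> nat \<Rightarrow> bool list"
  assumes "k \<ge> 1"
    and "optimal_finite_code k (2 powr (- 1 / real k)) T"
  shows "optimal_TDGD (2 powr (- 1 / real k))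
           (\<lambda>(i,j). T (i mod k, j mod k) @ unary (i div k) @ unary (j div k))"
proof -
  define q where "q = (2::real) powr (- 1 / real k)"
  have k: "k \<ge> 1" by (rule assms(1))
  have q0: "0 < q" unfolding q_def by simp
  have q1: "q < 1" unfolding q_def using k by (intro powr_less_one) auto
  have qk: "q^k = 1/2"
  proof -
    have "q^k = 2 powr (real k * (- 1 / real k))" unfolding q_def by (simp add: powr_power)
    also have "real k * (- 1 / real k) = -1" using k by simp
    finally show ?thesis by (simp add: powr_minus_divide)
  qed
  have Tpc: "prefix_code (alphabet_k k) T"
    and Topt: "\<And>d. prefix_code (alphabet_k k) d \<Longrightarrow> weighted_len_k k q T \<le> weighted_len_k k q d"
    using assms(2) unfolding optimal_finite_code_def q_def by auto
  obtain m :: "nat \<times> nat \<Rightarrow> nat" and J :: nat where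
    kr: "(\<Sum>c\<in>alphabet_k k. (1/2::real)^(m c)) = 1" and
    sw: "\<forall>r<k. \<forall>s<k. k * m (r,s) \<le> J + r + s \<and> J + r + s \<le> k * (m (r,s) + 1)"
    using exists_m[OF k] by blast
  obtain cm where cm: "prefix_code (alphabet_k k) cm" "\<forall>x\<in>alphabet_k k. length (cm x) = m x"
    using kraft_converse[of "alphabet_k k" m] kr finite_alph by auto
  have "weighted_len_k k q T \<le> weighted_len_k k q cm" using Topt cm(1) .
  also have "weighted_len_k k q cm = (\<Sum>(r,s)\<in>alphabet_k k. q^(r+s) * real (m (r,s)))"
    unfolding weighted_len_k_def using cm(2) by (intro sum.cong refl) auto
  finally have Fle: "(\<Sum>(r,s)\<in>alphabet_k k. q^(r+s) * real (length (T (r,s))))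
      \<le> (\<Sum>(r,s)\<in>alphabet_k k. q^(r+s) * real (m (r,s)))"
    unfolding weighted_len_k_def .
  have "optimal_TDGD q (\<lambda>(i,j). T (i mod k, j mod k) @ unary (i div k) @ unary (j div k))"
    unfolding optimal_TDGD_def
  proof (intro conjI allI impI)
    show "prefix_code UNIV (\<lambda>(i,j). T (i mod k, j mod k) @ unary (i div k) @ unary (j div k))"
      by (rule C_prefix_code[OF k Tpc])
    fix d :: "nat \<times> nat \<Rightarrow> bool list" assume "prefix_code UNIV d"
    then show "expected_len q (\<lambda>(i,j). T (i mod k, j mod k) @ unary (i div k) @ unary (j div k))
        \<le> expected_len q d"
      by (rule main_bound[OF k q0 q1 qk kr sw Fle])
  qed
  then show ?thesis unfolding q_def .
qed

end
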